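(* Let $V_1,V_2$ be vertex operator algebras, $W$ a weak $V_1\otimes V_2$-module and $W_2$ a finitely generated weak $V_2$-module. Then $\mathrm{Hom}_{V_2}(W_2,W)$ is a weak $V_1$-module with $(Y(v_{(1)},x)f)(w_{(2)})=Y(v_{(1)}\otimes\mathbf 1,x)f(w_{(2)})$ for $v_{(1)}\in V_1$, $f\in\mathrm{Hom}_{V_2}(W_2,W)$, $w_{(2)}\in W_2$. Moreover, if $W_2$ is an (ordinary) $V_2$-module and $W$ is an (ordinary) $V_1\otimes V_2$-module on which $L^1(0)$ or $L^2(0)$ acts semisimply, then $\mathrm{Hom}_{V_2}(W_2,W)$ is an (ordinary) $V_1$-module.
   Context: Weak modules for a vertex operator algebra $U$ with vacuum $\mathbf 1$: vector space $M$ with $Y_M:U\to(\mathrm{End}\,M)[[x,x^{-1}]]$ such that $Y_M(u,x)m\in M((x))$, $Y_M(\mathbf 1,x)=\mathrm{id}$, and the Jacobi identity $x_0^{-1}\delta(\frac{x_1-x_2}{x_0})Y_M(u,x_1)Y_M(v,x_2)-x_0^{-1}\delta(\frac{x_2-x_1}{-x_0})Y_M(v,x_2)Y_M(u,x_1)=x_2^{-1}\delta(\frac{x_1-x_0}{x_2})Y_M(Y(u,x_0)v,x_2)$ holds, where $\delta(x)=\sum_{n\in\mathbb Z}x^n$ and binomials are expanded in nonnegative powers of the second variable. An (ordinary) module is a weak module on which $L(0)$ acts semisimply, $M=\coprod_{h\in\mathbb C}M_{(h)}$, with $\dim M_{(h)}<\infty$ and $M_{(h+n)}=0$ for all sufficiently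 negative integers $n$. $V_1\otimes V_2$ is the tensor product vertex operator algebra; $V_1$ and $V_2$ are identified with the subalgebras $V_1\otimes\mathbf 1$ and $\mathbf 1\otimes V_2$, so that a weak $V_1\otimes V_2$-module is a weak $V_1$-module and a weak $V_2$-module with commuting actions. $L^1(n)$ and $L^2(n)$ denote the Virasoro operators from the Virasoro elements of $V_1$ and $V_2$; $L^1(n)+L^2(n)$ are those of $V_1\otimes V_2$. A weak $V_2$-module is finitely generated if it is generated by a finite-dimensional subspace. *)

theory Defs
  imports Complex_Main "HOL-Library.Function_Algebras" "HOL-Library.Groups_Big_Fun"
begin

class cvec = ab_group_add +
  fixes scaleC :: "complex \<Rightarrow> 'a \<Rightarrow> 'a" (infixr \<open>*\<^sub>C\<close> 75)
  assumes scaleC_add_right: "a *\<^sub>C (x + y) = a *\<^sub>C x + a *\<^sub>C y"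
    and scaleC_add_left: "(a + b) *\<^sub>C x = a *\<^sub>C x + b *\<^sub>C x"
    and scaleC_scaleC: "a *\<^sub>C (b *\<^sub>C x) = (a * b) *\<^sub>C x"
    and scaleC_one: "1 *\<^sub>C x = x"

global_interpretation cv: vector_space "scaleC :: complex \<Rightarrow> 'a::cvec \<Rightarrow> 'a"
  by unfold_locales (simp_all add: scaleC_add_right scaleC_add_left scaleC_scaleC scaleC_one)

instantiation "fun" :: (type, cvec) cvec
begin
definition scaleC_fun :: "complex \<Rightarrow> ('a \<Rightarrow> 'b) \<Rightarrow> 'a \<Rightarrow> 'b" where
  "scaleC_fun c f = (\<lambda>x. c *\<^sub>C f x)"
instance
  by standard (simp_all add: scaleC_fun_def fun_eq_iff scaleC_add_right scaleC_add_left
      scaleC_scaleC scaleC_one)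
end

definition clinear_on :: "'a::cvec set \<Rightarrow> ('a \<Rightarrow> 'b::cvec) \<Rightarrow> bool" where
  "clinear_on S f \<longleftrightarrow> (\<forall>x\<in>S. \<forall>y\<in>S. f (x + y) = f x + f y) \<and>
                       (\<forall>c. \<forall>x\<in>S. f (c *\<^sub>C x) = c *\<^sub>C f x)"

definition fin_dim :: "'a::cvec set \<Rightarrow> bool" where
  "fin_dim S \<longleftrightarrow> (\<exists>B. finite B \<and> S \<subseteq> cv.span B)"

definition eigsp :: "'a::cvec set \<Rightarrow> ('a \<Rightarrow> 'a) \<Rightarrow> complex \<Rightarrow> 'a set" where
  "eigsp M T h = {w \<in> M. T w = h *\<^sub>C w}"

definition acts_semisimply :: "'a::cvec set \<Rightarrow> ('a \<Rightarrow> 'a) \<Rightarrow> bool" where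
  "acts_semisimply M T \<longleftrightarrow> M = cv.span (\<Union>h. eigsp M T h)"

definition ordinary_grading :: "'a::cvec set \<Rightarrow> ('a \<Rightarrow> 'a) \<Rightarrow> bool" where
  "ordinary_grading M L0 \<longleftrightarrow>
     acts_semisimply M L0 \<and>
     (\<forall>h. fin_dim (eigsp M L0 h)) \<and>
     (\<forall>h. \<exists>N::int. \<forall>n::int. n < N \<longrightarrow> eigsp M L0 (h + of_int n) = {0})"

text \<open>Vertex operators are encoded by their modes: vop V u n v is the coefficient
  u_n v of x^(-n-1) in Y(u,x)v.\<close>

record 'v voa_data =
  vspace :: "'v set"
  vac :: 'v
  vop :: "'v \<Rightarrow> int \<Rightarrow> 'v \<Rightarrow> 'v"
  conf :: 'v

text \<open>The Jacobi identity, written coefficientwise: the coefficient of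
  x0^(-l-1) x1^(-m-1) x2^(-n-1) in the Jacobi identity applied to w.
  All sums have finitely many nonzero terms by truncation.\<close>
definition jacobi :: "'v voa_data \<Rightarrow> 'm::cvec set \<Rightarrow> ('v \<Rightarrow> int \<Rightarrow> 'm \<Rightarrow> 'm) \<Rightarrow> bool" where
  "jacobi V M Y \<longleftrightarrow>
    (\<forall>u\<in>vspace V. \<forall>v\<in>vspace V. \<forall>w\<in>M. \<forall>l m n :: int.
       (\<Sum>i::nat. ((of_int m :: complex) gchoose i) *\<^sub>C Y (vop V u (l + int i) v) (m + n - int i) w)
     = (\<Sum>i::nat. ((-1) ^ i * ((of_int l :: complex) gchoose i)) *\<^sub>C
                      Y u (l + m - int i) (Y v (n + int i) w))
     - (\<Sum>i::nat. (((-1::complex) powi (l + int i)) * ((of_int l :: complex) gchoose i)) *\<^sub>C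
                      Y v (l + n - int i) (Y u (m + int i) w)))"

definition weak_module :: "'v::cvec voa_data \<Rightarrow> 'm::cvec set \<Rightarrow> ('v \<Rightarrow> int \<Rightarrow> 'm \<Rightarrow> 'm) \<Rightarrow> bool" where
  "weak_module V M Y \<longleftrightarrow>
     cv.subspace M \<and>
     (\<forall>u\<in>vspace V. \<forall>n. \<forall>w\<in>M. Y u n w \<in> M) \<and>
     (\<forall>u\<in>vspace V. \<forall>n. clinear_on M (Y u n)) \<and>
     (\<forall>n. \<forall>w\<in>M. clinear_on (vspace V) (\<lambda>u. Y u n w)) \<and>
     (\<forall>u\<in>vspace V. \<forall>w\<in>M. \<exists>N::int. \<forall>n\<ge>N. Y u n w = 0) \<and>
     (\<forall>n. \<forall>w\<in>M. Y (vac V) n w = (if n = -1 then w else 0)) \<and>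
     jacobi V M Y"

definition vir :: "'v voa_data \<Rightarrow> ('v \<Rightarrow> int \<Rightarrow> 'm \<Rightarrow> 'm) \<Rightarrow> int \<Rightarrow> 'm \<Rightarrow> 'm" where
  "vir V Y n = Y (conf V) (n + 1)"

definition is_voa :: "'v::cvec voa_data \<Rightarrow> bool" where
  "is_voa V \<longleftrightarrow>
     cv.subspace (vspace V) \<and> vac V \<in> vspace V \<and> conf V \<in> vspace V \<and>
     \<comment> \<open>Y : V -> (End V)[[x,x^-1]] linear, truncation, vacuum and Jacobi identity\<close>
     weak_module V (vspace V) (vop V) \<and>
     \<comment> \<open>creation property\<close>
     (\<forall>v\<in>vspace V. (\<forall>n\<ge>0. vop V v n (vac V) = 0) \<and> vop V v (-1) (vac V) = v) \<and>
     \<comment> \<open>Virasoro relations with some central charge c\<close>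
     (\<exists>c::complex. \<forall>m n::int. \<forall>v\<in>vspace V.
        vir V (vop V) m (vir V (vop V) n v) - vir V (vop V) n (vir V (vop V) m v)
        = of_int (m - n) *\<^sub>C vir V (vop V) (m + n) v
          + (if m + n = 0 then (of_int (m ^ 3 - m) / 12 * c) *\<^sub>C v else 0)) \<and>
     \<comment> \<open>L(-1)-derivative property: d/dx Y(v,x) = Y(L(-1)v,x)\<close>
     (\<forall>v\<in>vspace V. \<forall>n::int. \<forall>w\<in>vspace V.
        vop V (vir V (vop V) (-1) v) n w = (- of_int n) *\<^sub>C vop V v (n - 1) w) \<and>
     \<comment> \<open>V = direct sum of V_(n), n in Z, L(0)v = n v on V_(n), dim V_(n) finite,
         V_(n) = 0 for n sufficiently negative\<close>
     vspace V = cv.span (\<Union>n::int. eigsp (vspace V) (vir V (vop V) 0) (of_int n)) \<and>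
     (\<forall>n::int. fin_dim (eigsp (vspace V) (vir V (vop V) 0) (of_int n))) \<and>
     (\<exists>N::int. \<forall>n::int. n < N \<longrightarrow> eigsp (vspace V) (vir V (vop V) 0) (of_int n) = {0})"

definition ordinary_module :: "'v::cvec voa_data \<Rightarrow> 'm::cvec set \<Rightarrow> ('v \<Rightarrow> int \<Rightarrow> 'm \<Rightarrow> 'm) \<Rightarrow> bool" where
  "ordinary_module V M Y \<longleftrightarrow> weak_module V M Y \<and> ordinary_grading M (vir V Y 0)"

definition gen_submodule :: "'v::cvec voa_data \<Rightarrow> 'm::cvec set \<Rightarrow> ('v \<Rightarrow> int \<Rightarrow> 'm \<Rightarrow> 'm) \<Rightarrow> 'm set \<Rightarrow> 'm set" where
  "gen_submodule V M Y S =
     \<Inter>{N. cv.subspace N \<and> N \<subseteq> M \<and> S \<subseteq> N \<and> (\<forall>u\<in>vspace V. \<forall>n. \<forall>w\<in>N. Y u n w \<in> N)}"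

definition finitely_generated :: "'v::cvec voa_data \<Rightarrow> 'm::cvec set \<Rightarrow> ('v \<Rightarrow> int \<Rightarrow> 'm \<Rightarrow> 'm) \<Rightarrow> bool" where
  "finitely_generated V M Y \<longleftrightarrow>
     (\<exists>S. cv.subspace S \<and> fin_dim S \<and> S \<subseteq> M \<and> gen_submodule V M Y S = M)"

text \<open>Following the standing identification, a weak V1 \<otimes> V2-module W is a weak V1-module
  (Y1, giving Y(v1 \<otimes> 1,x)) and a weak V2-module (Y2, giving Y(1 \<otimes> v2,x)) on the same
  space W with commuting actions.\<close>
definition weak_tensor_module ::
  "'v1::cvec voa_data \<Rightarrow> 'v2::cvec voa_data \<Rightarrow> 'm::cvec set \<Rightarrow>
   ('v1 \<Rightarrow> int \<Rightarrow> 'm \<Rightarrow> 'm) \<Rightarrow> ('v2 \<Rightarrow> int \<Rightarrow> 'm \<Rightarrow> 'm) \<Rightarrow> bool" where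
  "weak_tensor_module V1 V2 W Y1 Y2 \<longleftrightarrow>
     weak_module V1 W Y1 \<and> weak_module V2 W Y2 \<and>
     (\<forall>u\<in>vspace V1. \<forall>v\<in>vspace V2. \<forall>m n. \<forall>w\<in>W. Y1 u m (Y2 v n w) = Y2 v n (Y1 u m w))"

definition ordinary_tensor_module ::
  "'v1::cvec voa_data \<Rightarrow> 'v2::cvec voa_data \<Rightarrow> 'm::cvec set \<Rightarrow>
   ('v1 \<Rightarrow> int \<Rightarrow> 'm \<Rightarrow> 'm) \<Rightarrow> ('v2 \<Rightarrow> int \<Rightarrow> 'm \<Rightarrow> 'm) \<Rightarrow> bool" where
  "ordinary_tensor_module V1 V2 W Y1 Y2 \<longleftrightarrow>
     weak_tensor_module V1 V2 W Y1 Y2 \<and>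
     ordinary_grading W (\<lambda>w. vir V1 Y1 0 w + vir V2 Y2 0 w)"

definition hom_space ::
  "'v2::cvec voa_data \<Rightarrow> 'm2::cvec set \<Rightarrow> ('v2 \<Rightarrow> int \<Rightarrow> 'm2 \<Rightarrow> 'm2) \<Rightarrow>
   'm::cvec set \<Rightarrow> ('v2 \<Rightarrow> int \<Rightarrow> 'm \<Rightarrow> 'm) \<Rightarrow> ('m2 \<Rightarrow> 'm) set" where
  "hom_space V2 W2 Y2' W Y2 =
     {f. clinear_on W2 f \<and> (\<forall>x\<in>W2. f x \<in> W) \<and>
         (\<forall>v\<in>vspace V2. \<forall>n. \<forall>x\<in>W2. f (Y2' v n x) = Y2 v n (f x)) \<and>
         (\<forall>x. x \<notin> W2 \<longrightarrow> f x = 0)}"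

definition hom_vop :: "('v1 \<Rightarrow> int \<Rightarrow> 'm \<Rightarrow> 'm) \<Rightarrow> 'v1 \<Rightarrow> int \<Rightarrow> ('m2 \<Rightarrow> 'm) \<Rightarrow> ('m2 \<Rightarrow> 'm)" where
  "hom_vop Y1 u n f = (\<lambda>w. Y1 u n (f w))"

end

theory Submission
  imports Defs
begin



lemma clin_add: "clinear_on A g \<Longrightarrow> x \<in> A \<Longrightarrow> y \<in> A \<Longrightarrow> g (x + y) = g x + g y"
  unfolding clinear_on_def by blast

lemma clin_scale: "clinear_on A g \<Longrightarrow> x \<in> A \<Longrightarrow> g (c *\<^sub>C x) = c *\<^sub>C g x"
  unfolding clinear_on_def by blast

lemma clin_zero: "clinear_on A g \<Longrightarrow> 0 \<in> A \<Longrightarrow> g 0 = 0"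
  using clin_scale[of A g 0 0] by simp

lemma clin_diff:
  assumes "cv.subspace A" "clinear_on A g" "x \<in> A" "y \<in> A"
  shows "g (x - y) = g x - g y"
proof -
  have "x - y \<in> A" using assms cv.subspace_diff by blast
  then have "g x = g (x - y) + g y" using clin_add[OF assms(2), of "x - y" y] assms by simp
  then show ?thesis by (simp add: algebra_simps)
qed

lemma clin_sum:
  assumes "cv.subspace A" "clinear_on A g" "finite I" "\<And>i. i \<in> I \<Longrightarrow> v i \<in> A"
  shows "g (\<Sum>i\<in>I. v i) = (\<Sum>i\<in>I. g (v i))"
  using assms(3,4)
proof (induction I rule: finite_induct)
  case empty then show ?case using clin_zero[OF assms(2)] cv.subspace_0[OF assms(1)] by simp
next
  case (insert a F)
  have "sum v F \<in> A" using cv.subspace_sum[OF assms(1)] insert by blast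
  then show ?case using insert clin_add[OF assms(2), of "v a" "sum v F"] by simp
qed

lemma clin_comp:
  assumes "clinear_on A f" "\<And>x. x \<in> A \<Longrightarrow> f x \<in> B" "clinear_on B g" "cv.subspace A"
  shows "clinear_on A (\<lambda>x. g (f x))"
  unfolding clinear_on_def
proof (intro conjI ballI allI)
  fix x y assume "x \<in> A" "y \<in> A"
  then show "g (f (x + y)) = g (f x) + g (f y)"
    using assms clin_add by metis
next
  fix c x assume "x \<in> A"
  then show "g (f (c *\<^sub>C x)) = c *\<^sub>C g (f x)"
    using assms clin_scale by metis
qed

lemma clin_subset: "clinear_on A g \<Longrightarrow> B \<subseteq> A \<Longrightarrow> clinear_on B g"
  unfolding clinear_on_def by blast

lemma sum_fun_apply: "(\<Sum>i\<in>I. (F i :: 'a \<Rightarrow> 'b::comm_monoid_add)) x = (\<Sum>i\<in>I. F i x)"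
  by (induction I rule: infinite_finite_induct) auto

lemma scaleC_fun_apply: "(c *\<^sub>C f) x = c *\<^sub>C f x"
  by (simp add: scaleC_fun_def)

lemma subspace_preimage:
  assumes "cv.subspace A" "clinear_on A g" "cv.subspace B"
  shows "cv.subspace {x \<in> A. g x \<in> B}"
  unfolding cv.subspace_def
proof (intro conjI ballI allI)
  have "0 \<in> A" "0 \<in> B" using assms cv.subspace_0 by auto
  then show "0 \<in> {x \<in> A. g x \<in> B}"
    using clin_zero[OF assms(2)] by simp
next
  fix x y assume "x \<in> {x \<in> A. g x \<in> B}" "y \<in> {x \<in> A. g x \<in> B}"
  then have h: "x \<in> A" "y \<in> A" "g x \<in> B" "g y \<in> B" by auto
  then show "x + y \<in> {x \<in> A. g x \<in> B}"
    by (simp add: clin_add[OF assms(2)] cv.subspace_add[OF assms(1)] cv.subspace_add[OF assms(3)])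
next
  fix c x assume "x \<in> {x \<in> A. g x \<in> B}"
  then have h: "x \<in> A" "g x \<in> B" by auto
  then show "c *\<^sub>C x \<in> {x \<in> A. g x \<in> B}"
    by (simp add: clin_scale[OF assms(2)] cv.subspace_scale[OF assms(1)] cv.subspace_scale[OF assms(3)])
qed

lemma subspace_zero_set: "cv.subspace {0::'a::cvec}"
  unfolding cv.subspace_def by simp

lemma subspace_kernel:
  assumes "cv.subspace A" "clinear_on A g"
  shows "cv.subspace {x \<in> A. g x = 0}"
  using subspace_preimage[OF assms subspace_zero_set] by simp

lemma subspace_eqset:
  assumes "cv.subspace A" "clinear_on A F" "clinear_on A G"
  shows "cv.subspace {x \<in> A. F x = G x}"
  unfolding cv.subspace_def
proof (intro conjI ballI allI)
  have "0 \<in> A" using assms cv.subspace_0 by auto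
  then show "0 \<in> {x \<in> A. F x = G x}"
    using clin_zero[OF assms(2)] clin_zero[OF assms(3)] by simp
next
  fix x y assume "x \<in> {x \<in> A. F x = G x}" "y \<in> {x \<in> A. F x = G x}"
  then have h: "x \<in> A" "y \<in> A" "F x = G x" "F y = G y" by auto
  then show "x + y \<in> {x \<in> A. F x = G x}"
    by (simp add: clin_add[OF assms(2)] clin_add[OF assms(3)] cv.subspace_add[OF assms(1)])
next
  fix c x assume "x \<in> {x \<in> A. F x = G x}"
  then have h: "x \<in> A" "F x = G x" by auto
  then show "c *\<^sub>C x \<in> {x \<in> A. F x = G x}"
    by (simp add: clin_scale[OF assms(2)] clin_scale[OF assms(3)] cv.subspace_scale[OF assms(1)])
qed

lemma eigsp_subspace:
  assumes "cv.subspace M" "clinear_on M T"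
  shows "cv.subspace (eigsp M T h)"
  unfolding cv.subspace_def eigsp_def
proof (intro conjI ballI allI)
  have "0 \<in> M" using assms cv.subspace_0 by auto
  then show "0 \<in> {w \<in> M. T w = h *\<^sub>C w}"
    using assms(2) clin_zero by simp
next
  fix x y assume "x \<in> {w \<in> M. T w = h *\<^sub>C w}" "y \<in> {w \<in> M. T w = h *\<^sub>C w}"
  then have h: "x \<in> M" "y \<in> M" "T x = h *\<^sub>C x" "T y = h *\<^sub>C y" by auto
  then show "x + y \<in> {w \<in> M. T w = h *\<^sub>C w}"
    by (simp add: clin_add[OF assms(2)] cv.subspace_add[OF assms(1)] scaleC_add_right)
next
  fix c x assume "x \<in> {w \<in> M. T w = h *\<^sub>C w}"
  then have h: "x \<in> M" "T x = h *\<^sub>C x" by auto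
  then show "c *\<^sub>C x \<in> {w \<in> M. T w = h *\<^sub>C w}"
    by (simp add: clin_scale[OF assms(2)] cv.subspace_scale[OF assms(1)] scaleC_scaleC mult.commute)
qed

lemma finite_basis_in:
  assumes "fin_dim S"
  obtains B where "finite B" "B \<subseteq> S" "S \<subseteq> cv.span B"
proof -
  obtain B0 where B0: "finite B0" "S \<subseteq> cv.span B0" using assms unfolding fin_dim_def by auto
  obtain B where B: "B \<subseteq> S" "cv.independent B" "S \<subseteq> cv.span B" "card B = cv.dim S"
    by (rule cv.basis_exists)
  have "B \<subseteq> cv.span B0" using B(1) B0(2) by (rule order.trans)
  then have "finite B" using cv.independent_span_bound[OF B0(1) B(2)] by simp
  then show ?thesis using that B(1,3) by simp
qed

lemma fin_dim_subset: "fin_dim S \<Longrightarrow> T \<subseteq> S \<Longrightarrow> fin_dim T"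
  unfolding fin_dim_def by blast

lemma fin_dim_ext:
  fixes \<phi> :: "'a::cvec \<Rightarrow> 'b::cvec"
  assumes U: "cv.subspace U"
    and add: "\<And>x y. \<phi> (x + y) = \<phi> x + \<phi> y"
    and sc: "\<And>c x. \<phi> (c *\<^sub>C x) = c *\<^sub>C \<phi> x"
    and im: "\<phi> ` U \<subseteq> X" and fX: "fin_dim X"
    and fK: "fin_dim {x \<in> U. \<phi> x = 0}"
  shows "fin_dim U"
proof -
  have z: "\<phi> 0 = 0" using sc[of 0 0] by simp
  have dif: "\<phi> (x - y) = \<phi> x - \<phi> y" for x y
    using add[of "x - y" y] by (simp add: algebra_simps)
  have fd: "fin_dim (\<phi> ` U)" using fin_dim_subset[OF fX im] .
  obtain B1 where B1: "finite B1" "B1 \<subseteq> \<phi> ` U" "\<phi> ` U \<subseteq> cv.span B1"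
    by (rule finite_basis_in[OF fd])
  have "\<forall>b\<in>B1. \<exists>u. u \<in> U \<and> \<phi> u = b" using B1(2) by auto
  then obtain g where g: "\<And>b. b \<in> B1 \<Longrightarrow> g b \<in> U \<and> \<phi> (g b) = b" by metis
  define P where "P = g ` B1"
  have PU: "P \<subseteq> U" using g P_def by blast
  have spP: "cv.span P \<subseteq> U" using cv.span_minimal[OF PU U] .
  have lift: "\<exists>p\<in>cv.span P. \<phi> p = y" if yB: "y \<in> cv.span B1" for y
  proof (rule cv.span_induct[where P="\<lambda>y. \<exists>p\<in>cv.span P. \<phi> p = y"])
    show "y \<in> cv.span B1" by (rule yB)
    show "cv.subspace {y. \<exists>p\<in>cv.span P. \<phi> p = y}" unfolding cv.subspace_def
    proof (intro conjI ballI allI)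
      show "0 \<in> {y. \<exists>p\<in>cv.span P. \<phi> p = y}" using z cv.span_zero by blast
    next
      fix x y assume "x \<in> {y. \<exists>p\<in>cv.span P. \<phi> p = y}" "y \<in> {y. \<exists>p\<in>cv.span P. \<phi> p = y}"
      then obtain p q where pq: "p \<in> cv.span P" "\<phi> p = x" "q \<in> cv.span P" "\<phi> q = y" by auto
      then have "p + q \<in> cv.span P" "\<phi> (p + q) = x + y" using add cv.span_add by auto
      then show "x + y \<in> {y. \<exists>p\<in>cv.span P. \<phi> p = y}" by blast
    next
      fix c x assume "x \<in> {y. \<exists>p\<in>cv.span P. \<phi> p = y}"
      then obtain p where p: "p \<in> cv.span P" "\<phi> p = x" by auto
      then have "c *\<^sub>C p \<in> cv.span P" "\<phi> (c *\<^sub>C p) = c *\<^sub>C x" using sc cv.span_scale by auto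
      then show "c *\<^sub>C x \<in> {y. \<exists>p\<in>cv.span P. \<phi> p = y}" by blast
    qed
  next
    fix x assume "x \<in> B1"
    then have "g x \<in> P" "\<phi> (g x) = x" using g P_def by auto
    then show "\<exists>p\<in>cv.span P. \<phi> p = x" using cv.span_base by blast
  qed
  obtain BK where BK: "finite BK" "{x \<in> U. \<phi> x = 0} \<subseteq> cv.span BK"
    using fK unfolding fin_dim_def by blast
  have "U \<subseteq> cv.span (P \<union> BK)"
  proof
    fix u assume u: "u \<in> U"
    then have "\<phi> u \<in> cv.span B1" using B1 by blast
    then obtain p where p: "p \<in> cv.span P" "\<phi> p = \<phi> u" using lift by blast
    have "u - p \<in> U" using u p spP cv.subspace_diff[OF U] by blast
    moreover have "\<phi> (u - p) = 0" using dif p by simp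
    ultimately have "u - p \<in> cv.span BK" using BK by blast
    then have "u - p \<in> cv.span (P \<union> BK)" using cv.span_mono[of BK "P \<union> BK"] by blast
    moreover have "p \<in> cv.span (P \<union> BK)" using p cv.span_mono[of P "P \<union> BK"] by blast
    ultimately have "p + (u - p) \<in> cv.span (P \<union> BK)" using cv.span_add by blast
    then show "u \<in> cv.span (P \<union> BK)" by simp
  qed
  moreover have "finite (P \<union> BK)" using P_def B1 BK by simp
  ultimately show ?thesis unfolding fin_dim_def by blast
qed

lemma span_finite_support:
  assumes "y \<in> cv.span (\<Union>h. E h)"
  shows "\<exists>H. finite H \<and> y \<in> cv.span (\<Union>h\<in>H. E h)"
proof -
  obtain t r where t: "finite t" "t \<subseteq> (\<Union>h. E h)" "y = (\<Sum>a\<in>t. r a *\<^sub>C a)"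
    using assms unfolding cv.span_explicit by blast
  have "\<forall>a\<in>t. \<exists>h. a \<in> E h" using t by blast
  then obtain k where k: "\<And>a. a \<in> t \<Longrightarrow> a \<in> E (k a)" by metis
  have "t \<subseteq> (\<Union>h\<in>k ` t. E h)" using k by blast
  then have "y \<in> cv.span (\<Union>h\<in>k ` t. E h)"
    unfolding t(3) by (intro cv.span_sum cv.span_scale cv.span_base) blast
  then show ?thesis using t(1) by blast
qed




section \<open>Lagrange interpolation projections\<close>

definition lst :: "'a set \<Rightarrow> 'a list" where
  "lst H = (SOME cs. distinct cs \<and> set cs = H)"

lemma lst: "finite H \<Longrightarrow> distinct (lst H) \<and> set (lst H) = H"
  unfolding lst_def using finite_distinct_list[of H] by (metis (mono_tags, lifting) someI_ex)

primrec polyop :: "('a::cvec \<Rightarrow> 'a) \<Rightarrow> complex list \<Rightarrow> 'a \<Rightarrow> 'a" where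
  "polyop T [] y = y"
| "polyop T (c # cs) y = T (polyop T cs y) - c *\<^sub>C polyop T cs y"

definition proj :: "('a::cvec \<Rightarrow> 'a) \<Rightarrow> complex set \<Rightarrow> complex \<Rightarrow> 'a \<Rightarrow> 'a" where
  "proj T H h y = (\<Prod>h'\<in>H - {h}. 1 / (h - h')) *\<^sub>C polyop T (lst (H - {h})) y"

lemma clin_scalefun: "clinear_on M f \<Longrightarrow> clinear_on M (\<lambda>y. c *\<^sub>C f y)"
  unfolding clinear_on_def by (simp add: scaleC_add_right scaleC_scaleC mult.commute)

lemma clin_id: "clinear_on M (\<lambda>y. y)"
  unfolding clinear_on_def by simp

lemma clin_sumfun:
  assumes "finite I" "\<And>i. i \<in> I \<Longrightarrow> clinear_on M (f i)"
  shows "clinear_on M (\<lambda>y. \<Sum>i\<in>I. f i y)"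
  unfolding clinear_on_def
proof (intro conjI ballI allI)
  fix x y assume "x \<in> M" "y \<in> M"
  then show "(\<Sum>i\<in>I. f i (x + y)) = (\<Sum>i\<in>I. f i x) + (\<Sum>i\<in>I. f i y)"
  proof -
    have "(\<Sum>i\<in>I. f i (x + y)) = (\<Sum>i\<in>I. f i x + f i y)"
      by (rule sum.cong[OF refl]) (rule clin_add[OF assms(2)], auto simp: \<open>x \<in> M\<close> \<open>y \<in> M\<close>)
    then show ?thesis by (simp add: sum.distrib)
  qed
next
  fix c x assume "x \<in> M"
  then show "(\<Sum>i\<in>I. f i (c *\<^sub>C x)) = c *\<^sub>C (\<Sum>i\<in>I. f i x)"
  proof -
    have "(\<Sum>i\<in>I. f i (c *\<^sub>C x)) = (\<Sum>i\<in>I. c *\<^sub>C f i x)"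
      by (rule sum.cong[OF refl]) (rule clin_scale[OF assms(2)], auto simp: \<open>x \<in> M\<close>)
    then show ?thesis by (simp add: cv.scale_sum_right)
  qed
qed

lemma span_eqset:
  assumes "cv.subspace M" "clinear_on M F" "clinear_on M G" "S \<subseteq> M"
    "\<And>y. y \<in> S \<Longrightarrow> F y = G y" "y \<in> cv.span S"
  shows "F y = G y"
proof -
  have "cv.span S \<subseteq> {x \<in> M. F x = G x}"
    using assms(4,5) by (intro cv.span_minimal subspace_eqset assms(1-3)) auto
  then show ?thesis using assms(6) by auto
qed

context
  fixes M :: "'a::cvec set" and T :: "'a \<Rightarrow> 'a"
  assumes M: "cv.subspace M" and TL: "clinear_on M T" and TM0: "\<forall>y\<in>M. T y \<in> M"
begin

lemma TM: "y \<in> M \<Longrightarrow> T y \<in> M" using TM0 by blast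

lemma polyop_in: "y \<in> M \<Longrightarrow> polyop T cs y \<in> M"
  by (induction cs) (auto intro: TM cv.subspace_diff[OF M] cv.subspace_scale[OF M])

lemma polyop_lin: "clinear_on M (polyop T cs)"
proof (induction cs)
  case Nil then show ?case by (simp add: clinear_on_def)
next
  case (Cons c cs)
  show ?case unfolding clinear_on_def
  proof (intro conjI ballI allI)
    fix x y assume xy: "x \<in> M" "y \<in> M"
    have p: "polyop T cs (x + y) = polyop T cs x + polyop T cs y"
      using clin_add[OF Cons.IH xy] .
    have t: "T (polyop T cs x + polyop T cs y) = T (polyop T cs x) + T (polyop T cs y)"
      using clin_add[OF TL polyop_in[OF xy(1)] polyop_in[OF xy(2)]] .
    show "polyop T (c # cs) (x + y) = polyop T (c # cs) x + polyop T (c # cs) y"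
      by (simp add: p t scaleC_add_right algebra_simps)
  next
    fix a x assume x: "x \<in> M"
    have p: "polyop T cs (a *\<^sub>C x) = a *\<^sub>C polyop T cs x"
      using clin_scale[OF Cons.IH x] .
    have t: "T (a *\<^sub>C polyop T cs x) = a *\<^sub>C T (polyop T cs x)"
      using clin_scale[OF TL polyop_in[OF x]] .
    show "polyop T (c # cs) (a *\<^sub>C x) = a *\<^sub>C polyop T (c # cs) x"
      by (simp add: p t cv.scale_right_diff_distrib scaleC_scaleC mult.commute)
  qed
qed

lemma polyop_eig:
  assumes "y \<in> eigsp M T e"
  shows "polyop T cs y = (\<Prod>c\<leftarrow>cs. e - c) *\<^sub>C y"
proof (induction cs)
  case Nil then show ?case by (simp add: scaleC_one)
next
  case (Cons c cs)
  have y: "y \<in> M" "T y = e *\<^sub>C y" using assms unfolding eigsp_def by auto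
  have "T ((\<Prod>c\<leftarrow>cs. e - c) *\<^sub>C y) = (\<Prod>c\<leftarrow>cs. e - c) *\<^sub>C (e *\<^sub>C y)"
    using clin_scale[OF TL y(1)] y(2) by simp
  then have "polyop T (c # cs) y = ((\<Prod>c\<leftarrow>cs. e - c) * e) *\<^sub>C y - (c * (\<Prod>c\<leftarrow>cs. e - c)) *\<^sub>C y"
    using Cons.IH by (simp add: scaleC_scaleC)
  also have "\<dots> = ((\<Prod>c\<leftarrow>cs. e - c) * e - c * (\<Prod>c\<leftarrow>cs. e - c)) *\<^sub>C y"
    by (rule cv.scale_left_diff_distrib[symmetric])
  also have "(\<Prod>c\<leftarrow>cs. e - c) * e - c * (\<Prod>c\<leftarrow>cs. e - c) = (\<Prod>c\<leftarrow>c # cs. e - c)"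
    by (simp add: algebra_simps)
  finally show ?case .
qed

lemma polyop_comm:
  assumes gL: "clinear_on M g" and gM0: "\<forall>y\<in>M. g y \<in> M"
    and gT0: "\<forall>y\<in>M. g (T y) = T (g y)" and y: "y \<in> M"
  shows "g (polyop T cs y) = polyop T cs (g y)"
proof (induction cs)
  case Nil then show ?case by simp
next
  case (Cons c cs)
  have p: "polyop T cs y \<in> M" using polyop_in y .
  have "g (polyop T (c # cs) y) = g (T (polyop T cs y)) - g (c *\<^sub>C polyop T cs y)"
    using clin_diff[OF M gL] TM p cv.subspace_scale[OF M p] by simp
  also have "\<dots> = T (g (polyop T cs y)) - c *\<^sub>C g (polyop T cs y)"
    using bspec[OF gT0 p] clin_scale[OF gL p] by simp
  finally show ?case using Cons.IH by simp
qed

lemma proj_in: "y \<in> M \<Longrightarrow> proj T H h y \<in> M"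
  unfolding proj_def by (intro cv.subspace_scale[OF M] polyop_in)

lemma proj_lin: "clinear_on M (proj T H h)"
  unfolding proj_def by (rule clin_scalefun[OF polyop_lin])

lemma proj_comm:
  assumes gL: "clinear_on M g" and gM0: "\<forall>y\<in>M. g y \<in> M"
    and gT0: "\<forall>y\<in>M. g (T y) = T (g y)" and y: "y \<in> M"
  shows "g (proj T H h y) = proj T H h (g y)"
  unfolding proj_def using clin_scale[OF gL polyop_in[OF y]] polyop_comm[OF gL gM0 gT0 y] by simp

lemma proj_eig:
  assumes H: "finite H" and e: "e \<in> H" and y: "y \<in> eigsp M T e"
  shows "proj T H h y = (if h = e then y else 0)"
proof -
  have fin: "finite (H - {h})" using H by simp
  have "polyop T (lst (H - {h})) y = (\<Prod>c\<leftarrow>lst (H - {h}). e - c) *\<^sub>C y"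
    using polyop_eig[OF y] .
  also have "(\<Prod>c\<leftarrow>lst (H - {h}). e - c) = (\<Prod>c\<in>H - {h}. e - c)"
    using lst[OF fin] prod.distinct_set_conv_list[of "lst (H - {h})" "\<lambda>c. e - c"] by simp
  finally have pe: "polyop T (lst (H - {h})) y = (\<Prod>c\<in>H - {h}. e - c) *\<^sub>C y" .
  show ?thesis
  proof (cases "h = e")
    case True
    have "(\<Prod>h'\<in>H - {h}. 1 / (h - h')) * (\<Prod>c\<in>H - {h}. e - c) = (\<Prod>h'\<in>H - {h}. 1 / (h - h') * (e - h'))"
      unfolding prod.distrib[symmetric] by (rule prod.cong) auto
    also have "\<dots> = 1" using True by (intro prod.neutral) auto
    finally show ?thesis unfolding proj_def pe using True by (simp add: scaleC_scaleC scaleC_one)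
  next
    case False
    then have "e \<in> H - {h}" using e by simp
    then have "(\<Prod>c\<in>H - {h}. e - c) = 0" using fin by (intro prod_zero) auto
    then show ?thesis unfolding proj_def pe using False by (simp add: scaleC_scaleC)
  qed
qed

lemma proj_span:
  assumes H: "finite H" and y: "y \<in> cv.span (\<Union>e\<in>H. eigsp M T e)"
  shows "(\<Sum>h\<in>H. proj T H h y) = y" and "T (proj T H h y) = h *\<^sub>C proj T H h y"
proof -
  have sub: "(\<Union>e\<in>H. eigsp M T e) \<subseteq> M" unfolding eigsp_def by auto
  show "(\<Sum>h\<in>H. proj T H h y) = y"
  proof (rule span_eqset[OF M _ clin_id sub _ y])
    show "clinear_on M (\<lambda>y. \<Sum>h\<in>H. proj T H h y)" using H proj_lin by (intro clin_sumfun) auto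
  next
    fix z assume "z \<in> (\<Union>e\<in>H. eigsp M T e)"
    then obtain e where e: "e \<in> H" "z \<in> eigsp M T e" by auto
    have "(\<Sum>h\<in>H. proj T H h z) = (\<Sum>h\<in>H. if h = e then z else 0)"
      using proj_eig[OF H e] by simp
    also have "\<dots> = z" using H e(1) by simp
    finally show "(\<Sum>h\<in>H. proj T H h z) = z" .
  qed
  show "T (proj T H h y) = h *\<^sub>C proj T H h y"
  proof (rule span_eqset[OF M _ _ sub _ y])
    show "clinear_on M (\<lambda>y. T (proj T H h y))"
      using clin_comp[OF proj_lin proj_in TL M] .
    show "clinear_on M (\<lambda>y. h *\<^sub>C proj T H h y)" by (rule clin_scalefun[OF proj_lin])
  next
    fix z assume "z \<in> (\<Union>e\<in>H. eigsp M T e)"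
    then obtain e where e: "e \<in> H" "z \<in> eigsp M T e" by auto
    have z: "z \<in> M" "T z = e *\<^sub>C z" using e(2) unfolding eigsp_def by auto
    show "T (proj T H h z) = h *\<^sub>C proj T H h z"
      using proj_eig[OF H e] z clin_zero[OF TL cv.subspace_0[OF M]] by simp
  qed
qed

end

lemma ss_invariant:
  assumes M: "cv.subspace M" and TL: "clinear_on M T" and TM: "\<And>y. y \<in> M \<Longrightarrow> T y \<in> M"
    and ss: "acts_semisimply M T"
    and U: "cv.subspace U" "U \<subseteq> M" and TU: "\<And>y. y \<in> U \<Longrightarrow> T y \<in> U"
  shows "acts_semisimply U T"
proof -
  have TLU: "clinear_on U T" using clin_subset[OF TL U(2)] .
  have TM0: "\<forall>y\<in>M. T y \<in> M" using TM by blast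
  have TU0: "\<forall>y\<in>U. T y \<in> U" using TU by blast
  have "U \<subseteq> cv.span (\<Union>h. eigsp U T h)"
  proof
    fix u assume u: "u \<in> U"
    have Meq: "M = cv.span (\<Union>h. eigsp M T h)" using ss unfolding acts_semisimply_def .
    have "u \<in> M" using u U(2) by auto
    then have "u \<in> cv.span (\<Union>h. eigsp M T h)" by (subst Meq[symmetric])
    then obtain H where H: "finite H" "u \<in> cv.span (\<Union>h\<in>H. eigsp M T h)"
      using span_finite_support[of u "\<lambda>h. eigsp M T h"] by auto
    have eq: "(\<Sum>h\<in>H. proj T H h u) = u" using proj_span(1)[OF M TL TM0 H] by simp
    have "proj T H h u \<in> eigsp U T h" for h
      using proj_span(2)[OF M TL TM0 H(1) H(2)] proj_in[OF U(1) TLU TU0 u] unfolding eigsp_def by simp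
    then have "(\<Sum>h\<in>H. proj T H h u) \<in> cv.span (\<Union>h. eigsp U T h)"
      by (intro cv.span_sum cv.span_base) blast
    then show "u \<in> cv.span (\<Union>h. eigsp U T h)" using eq by simp
  qed
  moreover have "cv.span (\<Union>h. eigsp U T h) \<subseteq> U"
    by (rule cv.span_minimal[OF _ U(1)]) (auto simp: eigsp_def)
  ultimately show ?thesis unfolding acts_semisimply_def by (rule antisym)
qed




section \<open>Hom space is a weak module\<close>

definition gens :: "'v2::cvec voa_data \<Rightarrow> 'm2::cvec set \<Rightarrow> ('v2 \<Rightarrow> int \<Rightarrow> 'm2 \<Rightarrow> 'm2) \<Rightarrow> 'm2 set \<Rightarrow> bool" where
  "gens V2 W2 Y2' B \<longleftrightarrow> finite B \<and> B \<subseteq> W2 \<and>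
     (\<forall>N. cv.subspace N \<longrightarrow> N \<subseteq> W2 \<longrightarrow> B \<subseteq> N \<longrightarrow> (\<forall>v\<in>vspace V2. \<forall>n. \<forall>x\<in>N. Y2' v n x \<in> N) \<longrightarrow> W2 \<subseteq> N)"

lemma fg_gens:
  assumes "finitely_generated V2 W2 Y2'"
  shows "\<exists>B. gens V2 W2 Y2' B"
proof -
  obtain S where S: "cv.subspace S" "fin_dim S" "S \<subseteq> W2" "gen_submodule V2 W2 Y2' S = W2"
    using assms unfolding finitely_generated_def by auto
  obtain B where B: "finite B" "B \<subseteq> S" "S \<subseteq> cv.span B" by (rule finite_basis_in[OF S(2)])
  have "W2 \<subseteq> N" if N: "cv.subspace N" "N \<subseteq> W2" "B \<subseteq> N" "\<forall>v\<in>vspace V2. \<forall>n. \<forall>x\<in>N. Y2' v n x \<in> N" for N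
  proof -
    have "cv.span B \<subseteq> N" using cv.span_minimal[OF N(3) N(1)] .
    then have "S \<subseteq> N" using B(3) by (rule order.trans[rotated])
    then have "gen_submodule V2 W2 Y2' S \<subseteq> N"
      unfolding gen_submodule_def using N by (intro Inter_lower) simp
    then show ?thesis using S(4) by simp
  qed
  moreover have "B \<subseteq> W2" using B(2) S(3) by (rule order.trans)
  ultimately show ?thesis unfolding gens_def using B(1) by blast
qed

lemma gens_span:
  assumes "gens V2 W2 Y2' B" "finite C" "C \<subseteq> W2" "B \<subseteq> cv.span C"
  shows "gens V2 W2 Y2' C"
  unfolding gens_def
proof (intro conjI allI impI)
  fix N assume N: "cv.subspace N" "N \<subseteq> W2" "C \<subseteq> N" "\<forall>v\<in>vspace V2. \<forall>n. \<forall>x\<in>N. Y2' v n x \<in> N"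
  have "cv.span C \<subseteq> N" using cv.span_minimal[OF N(3) N(1)] .
  then have "B \<subseteq> N" using assms(4) by (rule order.trans[rotated])
  then show "W2 \<subseteq> N" using assms(1) N unfolding gens_def by blast
qed (use assms in auto)

lemma Sum_any_apply:
  fixes F :: "nat \<Rightarrow> 'a \<Rightarrow> 'b::comm_monoid_add"
  assumes "\<And>i. i \<ge> K \<Longrightarrow> F i = 0"
  shows "Sum_any F x = Sum_any (\<lambda>i. F i x)"
proof -
  have s1: "{i. F i \<noteq> 0} \<subseteq> {..<K}" using assms by (auto simp: not_less[symmetric])
  have s2: "{i. F i x \<noteq> 0} \<subseteq> {..<K}" using assms by (force simp: not_less[symmetric])
  have "Sum_any F = sum F {..<K}" by (rule Sum_any.expand_superset[OF _ s1]) simp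
  moreover have "Sum_any (\<lambda>i. F i x) = sum (\<lambda>i. F i x) {..<K}" by (rule Sum_any.expand_superset[OF _ s2]) simp
  ultimately show ?thesis by (simp add: sum_fun_apply)
qed

lemma weak_moduleD:
  assumes "weak_module V M Y"
  shows "cv.subspace M" "\<And>u n w. u \<in> vspace V \<Longrightarrow> w \<in> M \<Longrightarrow> Y u n w \<in> M"
    "\<And>u n. u \<in> vspace V \<Longrightarrow> clinear_on M (Y u n)"
    "\<And>n w. w \<in> M \<Longrightarrow> clinear_on (vspace V) (\<lambda>u. Y u n w)"
    "\<And>u w. u \<in> vspace V \<Longrightarrow> w \<in> M \<Longrightarrow> \<exists>N::int. \<forall>n\<ge>N. Y u n w = 0"
    "\<And>n w. w \<in> M \<Longrightarrow> Y (vac V) n w = (if n = -1 then w else 0)"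
    "jacobi V M Y"
  using assms unfolding weak_module_def by auto

lemma is_voaD:
  assumes "is_voa V"
  shows "cv.subspace (vspace V)" "vac V \<in> vspace V" "conf V \<in> vspace V" "weak_module V (vspace V) (vop V)"
  using assms unfolding is_voa_def by auto

locale homctx =
  fixes V1 :: "'v1::cvec voa_data" and V2 :: "'v2::cvec voa_data"
    and W :: "'m::cvec set" and Y1 :: "'v1 \<Rightarrow> int \<Rightarrow> 'm \<Rightarrow> 'm" and Y2 :: "'v2 \<Rightarrow> int \<Rightarrow> 'm \<Rightarrow> 'm"
    and W2 :: "'m2::cvec set" and Y2' :: "'v2 \<Rightarrow> int \<Rightarrow> 'm2 \<Rightarrow> 'm2"
  assumes V1: "is_voa V1"
    and TM: "weak_tensor_module V1 V2 W Y1 Y2"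
    and WM2: "weak_module V2 W2 Y2'"
begin

lemma wm1: "weak_module V1 W Y1" using TM unfolding weak_tensor_module_def by auto
lemma wm2: "weak_module V2 W Y2" using TM unfolding weak_tensor_module_def by auto
lemma comm: "u \<in> vspace V1 \<Longrightarrow> v \<in> vspace V2 \<Longrightarrow> w \<in> W \<Longrightarrow> Y1 u m (Y2 v n w) = Y2 v n (Y1 u m w)"
  using TM unfolding weak_tensor_module_def by auto

lemmas W1D = weak_moduleD[OF wm1]
lemmas W2D = weak_moduleD[OF wm2]
lemmas W2'D = weak_moduleD[OF WM2]
lemmas V1D = is_voaD[OF V1]

abbreviation "Hm \<equiv> hom_space V2 W2 Y2' W Y2"

lemma W0: "0 \<in> W" using cv.subspace_0[OF W1D(1)] .
lemma W20: "0 \<in> W2" using cv.subspace_0[OF W2'D(1)] .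

lemma Y1_0: "u \<in> vspace V1 \<Longrightarrow> Y1 u n 0 = 0"
  using clin_zero[OF W1D(3) W0] .
lemma Y2_0: "v \<in> vspace V2 \<Longrightarrow> Y2 v n 0 = 0"
  using clin_zero[OF W2D(3) W0] .
lemma Y1_zero_vec: "w \<in> W \<Longrightarrow> Y1 0 n w = 0"
  using clin_zero[OF W1D(4) cv.subspace_0[OF V1D(1)]] .

lemma homD:
  assumes "f \<in> Hm"
  shows "clinear_on W2 f" "\<And>x. x \<in> W2 \<Longrightarrow> f x \<in> W"
    "\<And>v n x. v \<in> vspace V2 \<Longrightarrow> x \<in> W2 \<Longrightarrow> f (Y2' v n x) = Y2 v n (f x)"
    "\<And>x. x \<notin> W2 \<Longrightarrow> f x = 0"
  using assms unfolding hom_space_def by auto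

lemma hom_W: "f \<in> Hm \<Longrightarrow> f x \<in> W"
  using homD[of f] W0 by (cases "x \<in> W2") auto

lemma hom_subspace: "cv.subspace Hm"
  unfolding cv.subspace_def
proof (intro conjI ballI allI)
  show "0 \<in> Hm" unfolding hom_space_def
    using W0 Y2_0 by (simp add: clinear_on_def)
next
  fix f g assume f: "f \<in> Hm" and g: "g \<in> Hm"
  note fD = homD[OF f] and gD = homD[OF g]
  show "f + g \<in> Hm" unfolding hom_space_def
  proof (intro CollectI conjI ballI allI impI)
    show "clinear_on W2 (f + g)" using fD(1) gD(1)
      unfolding clinear_on_def by (simp add: scaleC_add_right)
    show "(f + g) x \<in> W" if "x \<in> W2" for x
      using fD(2) gD(2) that cv.subspace_add[OF W1D(1)] by simp
    show "(f + g) (Y2' v n x) = Y2 v n ((f + g) x)" if "v \<in> vspace V2" "x \<in> W2" for v n x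
      using fD(2,3) gD(2,3) that clin_add[OF W2D(3)] by simp
    show "(f + g) x = 0" if "x \<notin> W2" for x using fD(4) gD(4) that by simp
  qed
next
  fix c f assume f: "f \<in> Hm"
  note fD = homD[OF f]
  show "c *\<^sub>C f \<in> Hm" unfolding hom_space_def
  proof (intro CollectI conjI ballI allI impI)
    show "clinear_on W2 (c *\<^sub>C f)" using fD(1)
      unfolding clinear_on_def by (simp add: scaleC_fun_def scaleC_add_right scaleC_scaleC mult.commute)
    show "(c *\<^sub>C f) x \<in> W" if "x \<in> W2" for x
      using fD(2) that cv.subspace_scale[OF W1D(1)] by (simp add: scaleC_fun_def)
    show "(c *\<^sub>C f) (Y2' v n x) = Y2 v n ((c *\<^sub>C f) x)" if "v \<in> vspace V2" "x \<in> W2" for v n x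
      using fD(2,3) that clin_scale[OF W2D(3)] by (simp add: scaleC_fun_def)
    show "(c *\<^sub>C f) x = 0" if "x \<notin> W2" for x using fD(4) that by (simp add: scaleC_fun_def)
  qed
qed

lemma hom_vop_in:
  assumes u: "u \<in> vspace V1" and f: "f \<in> Hm"
  shows "hom_vop Y1 u n f \<in> Hm"
  unfolding hom_space_def hom_vop_def
proof (intro CollectI conjI ballI allI impI)
  note fD = homD[OF f]
  show "clinear_on W2 (\<lambda>w. Y1 u n (f w))"
    using clin_comp[OF fD(1) fD(2) W1D(3)[OF u] W2'D(1)] .
  show "Y1 u n (f x) \<in> W" if "x \<in> W2" for x using W1D(2)[OF u fD(2)[OF that]] .
  show "Y1 u n (f (Y2' v m x)) = Y2 v m (Y1 u n (f x))" if "v \<in> vspace V2" "x \<in> W2" for v m x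
    using fD(3)[OF that] comm[OF u that(1) fD(2)[OF that(2)]] by simp
  show "Y1 u n (f x) = 0" if "x \<notin> W2" for x using fD(4)[OF that] Y1_0[OF u] by simp
qed

lemma hom_vop_lin:
  assumes u: "u \<in> vspace V1"
  shows "clinear_on Hm (hom_vop Y1 u n)"
  unfolding clinear_on_def hom_vop_def
proof (intro conjI ballI allI)
  fix f g assume "f \<in> Hm" "g \<in> Hm"
  then show "(\<lambda>w. Y1 u n ((f + g) w)) = (\<lambda>w. Y1 u n (f w)) + (\<lambda>w. Y1 u n (g w))"
    using clin_add[OF W1D(3)[OF u]] hom_W by (simp add: fun_eq_iff)
next
  fix c f assume "f \<in> Hm"
  then show "(\<lambda>w. Y1 u n ((c *\<^sub>C f) w)) = c *\<^sub>C (\<lambda>w. Y1 u n (f w))"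
    using clin_scale[OF W1D(3)[OF u]] hom_W by (simp add: fun_eq_iff scaleC_fun_def)
qed

lemma hom_vop_lin2:
  assumes f: "f \<in> Hm"
  shows "clinear_on (vspace V1) (\<lambda>u. hom_vop Y1 u n f)"
  unfolding clinear_on_def hom_vop_def
proof (intro conjI ballI allI)
  fix u v assume "u \<in> vspace V1" "v \<in> vspace V1"
  then show "(\<lambda>w. Y1 (u + v) n (f w)) = (\<lambda>w. Y1 u n (f w)) + (\<lambda>w. Y1 v n (f w))"
    using clin_add[OF W1D(4)[OF hom_W[OF f]]] by (simp add: fun_eq_iff)
next
  fix c u assume "u \<in> vspace V1"
  then show "(\<lambda>w. Y1 (c *\<^sub>C u) n (f w)) = c *\<^sub>C (\<lambda>w. Y1 u n (f w))"
    using clin_scale[OF W1D(4)[OF hom_W[OF f]]] by (simp add: fun_eq_iff scaleC_fun_def)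
qed

lemma hom_vac: "f \<in> Hm \<Longrightarrow> hom_vop Y1 (vac V1) n f = (if n = -1 then f else 0)"
  unfolding hom_vop_def using W1D(6)[OF hom_W] by (auto simp: fun_eq_iff)

lemma hom_trunc:
  assumes G: "gens V2 W2 Y2' B" and u: "u \<in> vspace V1" and f: "f \<in> Hm"
  shows "\<exists>N::int. \<forall>n\<ge>N. hom_vop Y1 u n f = 0"
proof -
  note fD = homD[OF f]
  have B: "finite B" "B \<subseteq> W2" using G unfolding gens_def by auto
  have "\<forall>b\<in>B. \<exists>N::int. \<forall>n\<ge>N. Y1 u n (f b) = 0"
    using W1D(5)[OF u fD(2)] B(2) by blast
  then obtain Nb where Nb: "\<And>b n. b \<in> B \<Longrightarrow> n \<ge> Nb b \<Longrightarrow> Y1 u n (f b) = 0" by metis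
  define N where "N = Max (insert 0 (Nb ` B))"
  have NB: "b \<in> B \<Longrightarrow> Nb b \<le> N" for b unfolding N_def using B(1) by (intro Max_ge) auto
  define T where "T = {x \<in> W2. \<forall>n\<ge>N. Y1 u n (f x) = 0}"
  have "W2 \<subseteq> T"
  proof -
    have "cv.subspace T" unfolding T_def cv.subspace_def
    proof (intro conjI ballI allI)
      show "0 \<in> {x \<in> W2. \<forall>n\<ge>N. Y1 u n (f x) = 0}"
        using W20 clin_zero[OF fD(1) W20] Y1_0[OF u] by simp
    next
      fix x y assume "x \<in> {x \<in> W2. \<forall>n\<ge>N. Y1 u n (f x) = 0}" "y \<in> {x \<in> W2. \<forall>n\<ge>N. Y1 u n (f x) = 0}"
      then have h: "x \<in> W2" "y \<in> W2" "\<And>n. n \<ge> N \<Longrightarrow> Y1 u n (f x) = 0" "\<And>n. n \<ge> N \<Longrightarrow> Y1 u n (f y) = 0" by auto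
      show "x + y \<in> {x \<in> W2. \<forall>n\<ge>N. Y1 u n (f x) = 0}"
        using h cv.subspace_add[OF W2'D(1) h(1,2)] clin_add[OF fD(1) h(1,2)]
          clin_add[OF W1D(3)[OF u] fD(2)[OF h(1)] fD(2)[OF h(2)]] by simp
    next
      fix c x assume "x \<in> {x \<in> W2. \<forall>n\<ge>N. Y1 u n (f x) = 0}"
      then have h: "x \<in> W2" "\<And>n. n \<ge> N \<Longrightarrow> Y1 u n (f x) = 0" by auto
      show "c *\<^sub>C x \<in> {x \<in> W2. \<forall>n\<ge>N. Y1 u n (f x) = 0}"
        using h cv.subspace_scale[OF W2'D(1) h(1)] clin_scale[OF fD(1) h(1)]
          clin_scale[OF W1D(3)[OF u] fD(2)[OF h(1)]] by simp
    qed
    moreover have "T \<subseteq> W2" unfolding T_def by auto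
    moreover have "B \<subseteq> T" unfolding T_def using B(2) Nb NB by force
    moreover have "\<forall>v\<in>vspace V2. \<forall>m. \<forall>x\<in>T. Y2' v m x \<in> T"
    proof (intro ballI allI)
      fix v m x assume v: "v \<in> vspace V2" and x: "x \<in> T"
      then have x2: "x \<in> W2" and xz: "\<And>n. n \<ge> N \<Longrightarrow> Y1 u n (f x) = 0" unfolding T_def by auto
      have "Y1 u n (f (Y2' v m x)) = 0" if "n \<ge> N" for n
        using fD(3)[OF v x2] comm[OF u v fD(2)[OF x2]] xz[OF that] Y2_0[OF v] by simp
      then show "Y2' v m x \<in> T" unfolding T_def using W2'D(2)[OF v x2] by simp
    qed
    ultimately show ?thesis using G unfolding gens_def by blast
  qed
  have "hom_vop Y1 u n f = 0" if "n \<ge> N" for n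
  proof (rule ext)
    fix x show "hom_vop Y1 u n f x = 0 x"
    proof (cases "x \<in> W2")
      case True then show ?thesis using \<open>W2 \<subseteq> T\<close> that unfolding T_def hom_vop_def by auto
    next
      case False then show ?thesis using fD(4) Y1_0[OF u] unfolding hom_vop_def by simp
    qed
  qed
  then show ?thesis by blast
qed

lemma hom_jacobi:
  assumes G: "gens V2 W2 Y2' B"
  shows "jacobi V1 Hm (hom_vop Y1)"
  unfolding jacobi_def
proof (intro ballI allI)
  fix u v f l m n
  assume u: "u \<in> vspace V1" and v: "v \<in> vspace V1" and f: "f \<in> Hm"
  let ?A = "\<lambda>i::nat. ((of_int m :: complex) gchoose i) *\<^sub>C hom_vop Y1 (vop V1 u (l + int i) v) (m + n - int i) f"
  let ?B = "\<lambda>i::nat. ((-1) ^ i * ((of_int l :: complex) gchoose i)) *\<^sub>C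
                      hom_vop Y1 u (l + m - int i) (hom_vop Y1 v (n + int i) f)"
  let ?C = "\<lambda>i::nat. (((-1::complex) powi (l + int i)) * ((of_int l :: complex) gchoose i)) *\<^sub>C
                      hom_vop Y1 v (l + n - int i) (hom_vop Y1 u (m + int i) f)"
  have VV: "weak_module V1 (vspace V1) (vop V1)" using V1D(4) .
  obtain Nuv where Nuv: "\<And>k. k \<ge> Nuv \<Longrightarrow> vop V1 u k v = 0"
    using weak_moduleD(5)[OF VV u v] by blast
  obtain Nv where Nv: "\<And>k. k \<ge> Nv \<Longrightarrow> hom_vop Y1 v k f = 0" using hom_trunc[OF G v f] by blast
  obtain Nu where Nu: "\<And>k. k \<ge> Nu \<Longrightarrow> hom_vop Y1 u k f = 0" using hom_trunc[OF G u f] by blast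
  have hz: "hom_vop Y1 w k 0 = 0" if "w \<in> vspace V1" for w k
    unfolding hom_vop_def using Y1_0[OF that] by (simp add: fun_eq_iff)
  have A0: "?A i = 0" if "i \<ge> nat (Nuv - l)" for i
  proof -
    have "vop V1 u (l + int i) v = 0" using that by (intro Nuv) simp
    then show ?thesis unfolding hom_vop_def using Y1_zero_vec[OF hom_W[OF f]]
      by (simp add: fun_eq_iff scaleC_fun_def)
  qed
  have B0: "?B i = 0" if "i \<ge> nat (Nv - n)" for i
  proof -
    have "hom_vop Y1 v (n + int i) f = 0" using that by (intro Nv) simp
    then show ?thesis by (simp add: hz[OF u])
  qed
  have C0: "?C i = 0" if "i \<ge> nat (Nu - m)" for i
  proof -
    have "hom_vop Y1 u (m + int i) f = 0" using that by (intro Nu) simp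
    then show ?thesis by (simp add: hz[OF v])
  qed
  show "Sum_any ?A = Sum_any ?B - Sum_any ?C"
  proof (rule ext)
    fix x
    have J: "jacobi V1 W Y1" using W1D(7) .
    have "Sum_any ?A x = Sum_any (\<lambda>i. ?A i x)" by (rule Sum_any_apply[where K="nat (Nuv - l)"], rule A0, assumption)
    also have "\<dots> = Sum_any (\<lambda>i. ?B i x) - Sum_any (\<lambda>i. ?C i x)"
      using J u v hom_W[OF f, of x] unfolding jacobi_def hom_vop_def scaleC_fun_def by blast
    also have "Sum_any (\<lambda>i. ?B i x) = Sum_any ?B x" by (rule Sum_any_apply[where K="nat (Nv - n)", symmetric], rule B0, assumption)
    also have "Sum_any (\<lambda>i. ?C i x) = Sum_any ?C x" by (rule Sum_any_apply[where K="nat (Nu - m)", symmetric], rule C0, assumption)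
    finally show "Sum_any ?A x = (Sum_any ?B - Sum_any ?C) x" by simp
  qed
qed

lemma hom_weak_module:
  assumes fg: "finitely_generated V2 W2 Y2'"
  shows "weak_module V1 Hm (hom_vop Y1)"
proof -
  obtain B where G: "gens V2 W2 Y2' B" using fg_gens[OF fg] by blast
  show ?thesis unfolding weak_module_def
    using hom_subspace hom_vop_in hom_vop_lin hom_vop_lin2 hom_trunc[OF G] hom_vac hom_jacobi[OF G]
    by blast
qed

end




lemma span_finite_subset:
  assumes "y \<in> cv.span X"
  shows "\<exists>t. finite t \<and> t \<subseteq> X \<and> y \<in> cv.span t"
proof -
  obtain t r where t: "finite t" "t \<subseteq> X" "y = (\<Sum>a\<in>t. r a *\<^sub>C a)"
    using assms unfolding cv.span_explicit by blast
  have "y \<in> cv.span t" unfolding t(3) by (intro cv.span_sum cv.span_scale cv.span_base)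
  then show ?thesis using t(1,2) by blast
qed

lemma ss_sum:
  assumes M: "cv.subspace M" and AL: "clinear_on M A" and AM: "\<And>y. y \<in> M \<Longrightarrow> A y \<in> M"
    and BL: "clinear_on M B" and BM: "\<And>y. y \<in> M \<Longrightarrow> B y \<in> M"
    and AB: "\<And>y. y \<in> M \<Longrightarrow> A (B y) = B (A y)"
    and ssL: "acts_semisimply M (\<lambda>w. A w + B w)" and ssB: "acts_semisimply M B"
  shows "acts_semisimply M A"
proof -
  let ?L = "\<lambda>w. A w + B w"
  have LL: "clinear_on M ?L" using AL BL unfolding clinear_on_def by (simp add: scaleC_add_right)
  have "eigsp M ?L h \<subseteq> cv.span (\<Union>h. eigsp M A h)" for h
  proof -
    let ?U = "eigsp M ?L h"
    have U: "cv.subspace ?U" using eigsp_subspace[OF M LL] .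
    have UM: "?U \<subseteq> M" unfolding eigsp_def by auto
    have BU: "B y \<in> ?U" if y: "y \<in> ?U" for y
    proof -
      have yM: "y \<in> M" and yL: "A y + B y = h *\<^sub>C y" using y unfolding eigsp_def by auto
      have "A (B y) + B (B y) = B (A y + B y)" using AB[OF yM] clin_add[OF BL AM[OF yM] BM[OF yM]] by simp
      also have "\<dots> = h *\<^sub>C B y" using yL clin_scale[OF BL yM] by simp
      finally show ?thesis unfolding eigsp_def using BM[OF yM] by simp
    qed
    have ssU: "acts_semisimply ?U B" using ss_invariant[OF M BL BM ssB U UM BU] .
    have "(\<Union>k. eigsp ?U B k) \<subseteq> (\<Union>h. eigsp M A h)"
    proof
      fix y assume "y \<in> (\<Union>k. eigsp ?U B k)"
      then obtain k where "y \<in> eigsp ?U B k" by auto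
      then have yM: "y \<in> M" and yL: "A y + B y = h *\<^sub>C y" and yB: "B y = k *\<^sub>C y"
        unfolding eigsp_def by auto
      have "A y = h *\<^sub>C y - k *\<^sub>C y" using yL yB by (simp add: algebra_simps)
      also have "\<dots> = (h - k) *\<^sub>C y" by (rule cv.scale_left_diff_distrib[symmetric])
      finally have "y \<in> eigsp M A (h - k)" unfolding eigsp_def using yM by simp
      then show "y \<in> (\<Union>h. eigsp M A h)" by blast
    qed
    then have "cv.span (\<Union>k. eigsp ?U B k) \<subseteq> cv.span (\<Union>h. eigsp M A h)" by (rule cv.span_mono)
    then show ?thesis using ssU unfolding acts_semisimply_def by simp
  qed
  then have "(\<Union>h. eigsp M ?L h) \<subseteq> cv.span (\<Union>h. eigsp M A h)" by blast
  then have "cv.span (\<Union>h. eigsp M ?L h) \<subseteq> cv.span (\<Union>h. eigsp M A h)"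
    by (rule cv.span_minimal[OF _ cv.subspace_span])
  then have "M \<subseteq> cv.span (\<Union>h. eigsp M A h)" using ssL unfolding acts_semisimply_def by simp
  moreover have "cv.span (\<Union>h. eigsp M A h) \<subseteq> M"
    by (rule cv.span_minimal[OF _ M]) (auto simp: eigsp_def)
  ultimately show ?thesis unfolding acts_semisimply_def by (rule antisym)
qed

lemma subspace_vanish:
  assumes "cv.subspace E"
  shows "cv.subspace {f \<in> E. \<forall>c\<in>K. (f :: 'a \<Rightarrow> 'b::cvec) c = 0}"
  unfolding cv.subspace_def
proof (intro conjI ballI allI)
  show "0 \<in> {f \<in> E. \<forall>c\<in>K. f c = 0}" using cv.subspace_0[OF assms] by simp
next
  fix f g assume "f \<in> {f \<in> E. \<forall>c\<in>K. f c = 0}" "g \<in> {f \<in> E. \<forall>c\<in>K. f c = 0}"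
  then show "f + g \<in> {f \<in> E. \<forall>c\<in>K. f c = 0}" using cv.subspace_add[OF assms] by simp
next
  fix a f assume "f \<in> {f \<in> E. \<forall>c\<in>K. f c = 0}"
  then show "a *\<^sub>C f \<in> {f \<in> E. \<forall>c\<in>K. f c = 0}" using cv.subspace_scale[OF assms]
    by (simp add: scaleC_fun_apply)
qed

context homctx
begin

abbreviation "L1 \<equiv> vir V1 Y1 0"
abbreviation "L2 \<equiv> vir V2 Y2 0"
abbreviation "L2' \<equiv> vir V2 Y2' 0"
abbreviation "HL \<equiv> vir V1 (hom_vop Y1) 0"

lemma HL_apply: "HL f = (\<lambda>x. L1 (f x))"
  by (simp add: vir_def hom_vop_def)

lemma L1_lin: "clinear_on W L1" unfolding vir_def using W1D(3)[OF V1D(3)] .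
lemma L1_W: "y \<in> W \<Longrightarrow> L1 y \<in> W" unfolding vir_def using W1D(2)[OF V1D(3)] .
lemma L1_Wb: "\<forall>y\<in>W. L1 y \<in> W" using L1_W by blast

lemma Y2_L1: "v \<in> vspace V2 \<Longrightarrow> y \<in> W \<Longrightarrow> Y2 v n (L1 y) = L1 (Y2 v n y)"
  unfolding vir_def using comm[OF V1D(3)] by simp

lemma HL_lin: "clinear_on Hm HL"
  using hom_vop_lin[OF V1D(3), of 1] by (simp add: vir_def)

lemma hom_ss:
  assumes G: "gens V2 W2 Y2' B" and ss1: "acts_semisimply W L1"
  shows "acts_semisimply Hm HL"
proof -
  have Wsub: "cv.subspace W" using W1D(1) .
  have Weq: "W = cv.span (\<Union>h. eigsp W L1 h)" using ss1 unfolding acts_semisimply_def .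
  have Bfin: "finite B" "B \<subseteq> W2" using G unfolding gens_def by auto
  have "Hm \<subseteq> cv.span (\<Union>h. eigsp Hm HL h)"
  proof
    fix f assume f: "f \<in> Hm"
    note fD = homD[OF f]
    have "\<forall>b\<in>B. \<exists>H. finite H \<and> f b \<in> cv.span (\<Union>h\<in>H. eigsp W L1 h)"
    proof
      fix b assume "b \<in> B"
      then have "f b \<in> W" using fD(2) Bfin(2) by auto
      then have "f b \<in> cv.span (\<Union>h. eigsp W L1 h)" by (subst Weq[symmetric])
      then show "\<exists>H. finite H \<and> f b \<in> cv.span (\<Union>h\<in>H. eigsp W L1 h)"
        by (rule span_finite_support)
    qed
    then obtain Hb where Hb: "\<And>b. b \<in> B \<Longrightarrow> finite (Hb b) \<and> f b \<in> cv.span (\<Union>h\<in>Hb b. eigsp W L1 h)"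
      by metis
    define H where "H = (\<Union>b\<in>B. Hb b)"
    have Hfin: "finite H" unfolding H_def using Bfin(1) Hb by blast
    define WH where "WH = cv.span (\<Union>h\<in>H. eigsp W L1 h)"
    have WHs: "cv.subspace WH" unfolding WH_def by (rule cv.subspace_span)
    have WHW: "WH \<subseteq> W" unfolding WH_def by (rule cv.span_minimal[OF _ Wsub]) (auto simp: eigsp_def)
    have fB: "f b \<in> WH" if "b \<in> B" for b
    proof -
      have "(\<Union>h\<in>Hb b. eigsp W L1 h) \<subseteq> (\<Union>h\<in>H. eigsp W L1 h)" unfolding H_def using that by blast
      then show ?thesis unfolding WH_def using Hb[OF that] cv.span_mono by blast
    qed
    have Y2WH: "Y2 v n y \<in> WH" if v: "v \<in> vspace V2" and y: "y \<in> WH" for v n y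
    proof -
      have "WH \<subseteq> {y \<in> W. Y2 v n y \<in> WH}" unfolding WH_def
      proof (rule cv.span_minimal)
        show "cv.subspace {y \<in> W. Y2 v n y \<in> cv.span (\<Union>h\<in>H. eigsp W L1 h)}"
          using subspace_preimage[OF Wsub W2D(3)[OF v] cv.subspace_span] .
        show "(\<Union>h\<in>H. eigsp W L1 h) \<subseteq> {y \<in> W. Y2 v n y \<in> cv.span (\<Union>h\<in>H. eigsp W L1 h)}"
        proof
          fix z assume "z \<in> (\<Union>h\<in>H. eigsp W L1 h)"
          then obtain h where h: "h \<in> H" "z \<in> W" "L1 z = h *\<^sub>C z" unfolding eigsp_def by auto
          have "L1 (Y2 v n z) = h *\<^sub>C Y2 v n z"
            using Y2_L1[OF v h(2)] h(3) clin_scale[OF W2D(3)[OF v] h(2)] by simp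
          then have "Y2 v n z \<in> eigsp W L1 h" unfolding eigsp_def using W2D(2)[OF v h(2)] by simp
          then have "Y2 v n z \<in> cv.span (\<Union>h\<in>H. eigsp W L1 h)" using h(1) by (intro cv.span_base) blast
          then show "z \<in> {y \<in> W. Y2 v n y \<in> cv.span (\<Union>h\<in>H. eigsp W L1 h)}" using h(2) by simp
        qed
      qed
      then show ?thesis using y by blast
    qed
    have fWH: "f x \<in> WH" for x
    proof -
      let ?T = "{x \<in> W2. f x \<in> WH}"
      have "W2 \<subseteq> ?T"
      proof -
        have "cv.subspace ?T" using subspace_preimage[OF W2'D(1) fD(1) WHs] .
        moreover have "?T \<subseteq> W2" by auto
        moreover have "B \<subseteq> ?T" using fB Bfin(2) by auto
        moreover have "\<forall>v\<in>vspace V2. \<forall>n. \<forall>x\<in>?T. Y2' v n x \<in> ?T"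
          using fD(3) Y2WH W2'D(2) by auto
        ultimately show ?thesis using G unfolding gens_def by blast
      qed
      then show ?thesis using fD(4) cv.subspace_0[OF WHs] by (cases "x \<in> W2") auto
    qed
    have WHsp: "WH \<subseteq> W" using WHW .
    define fh where "fh h = (\<lambda>x. proj L1 H h (f x))" for h
    note prlin = proj_lin[OF Wsub L1_lin L1_Wb]
    note prin = proj_in[OF Wsub L1_lin L1_Wb]
    have fh_in: "fh h \<in> Hm" for h
      unfolding hom_space_def
    proof (intro CollectI conjI ballI allI impI)
      show "clinear_on W2 (fh h)" unfolding fh_def using clin_comp[OF fD(1) fD(2) prlin W2'D(1)] .
      show "fh h x \<in> W" if "x \<in> W2" for x unfolding fh_def using prin[OF fD(2)[OF that]] .
      show "fh h (Y2' v n x) = Y2 v n (fh h x)" if v: "v \<in> vspace V2" and x: "x \<in> W2" for v n x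
      proof -
        have "Y2 v n (proj L1 H h (f x)) = proj L1 H h (Y2 v n (f x))"
          by (rule proj_comm[OF Wsub L1_lin L1_Wb W2D(3)[OF v] _ _ fD(2)[OF x]]) (use W2D(2)[OF v] Y2_L1[OF v] in auto)
        then show ?thesis unfolding fh_def using fD(3)[OF v x] by simp
      qed
      show "fh h x = 0" if "x \<notin> W2" for x
        unfolding fh_def using fD(4)[OF that] clin_zero[OF prlin W0] by simp
    qed
    have fh_eig: "fh h \<in> eigsp Hm HL h" for h
    proof -
      have "HL (fh h) = h *\<^sub>C fh h"
        unfolding HL_apply fh_def
        using proj_span(2)[OF Wsub L1_lin L1_Wb Hfin fWH[unfolded WH_def]]
        by (simp add: fun_eq_iff scaleC_fun_apply)
      then show ?thesis unfolding eigsp_def using fh_in by simp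
    qed
    have "(\<Sum>h\<in>H. fh h) = f"
    proof
      fix x
      show "(\<Sum>h\<in>H. fh h) x = f x"
        unfolding sum_fun_apply fh_def
        using proj_span(1)[OF Wsub L1_lin L1_Wb Hfin fWH[unfolded WH_def]] by simp
    qed
    moreover have "(\<Sum>h\<in>H. fh h) \<in> cv.span (\<Union>h. eigsp Hm HL h)"
      using fh_eig by (intro cv.span_sum cv.span_base) blast
    ultimately show "f \<in> cv.span (\<Union>h. eigsp Hm HL h)" by simp
  qed
  moreover have "cv.span (\<Union>h. eigsp Hm HL h) \<subseteq> Hm"
    by (rule cv.span_minimal[OF _ hom_subspace]) (auto simp: eigsp_def)
  ultimately show ?thesis unfolding acts_semisimply_def by (rule antisym)
qed

end




context homctx
begin

abbreviation "LL \<equiv> (\<lambda>w. vir V1 Y1 0 w + vir V2 Y2 0 w)"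

lemma hom_vanish:
  assumes G: "gens V2 W2 Y2' C" and f: "f \<in> Hm" and z: "\<And>c. c \<in> C \<Longrightarrow> f c = 0"
  shows "f = 0"
proof -
  note fD = homD[OF f]
  let ?T = "{x \<in> W2. f x = 0}"
  have "W2 \<subseteq> ?T"
  proof -
    have "cv.subspace ?T" using subspace_kernel[OF W2'D(1) fD(1)] .
    moreover have "?T \<subseteq> W2" by auto
    moreover have "C \<subseteq> ?T" using z G unfolding gens_def by auto
    moreover have "\<forall>v\<in>vspace V2. \<forall>n. \<forall>x\<in>?T. Y2' v n x \<in> ?T"
      using fD(3) Y2_0 W2'D(2) by auto
    ultimately show ?thesis using G unfolding gens_def by blast
  qed
  then show ?thesis using fD(4) by (auto simp: fun_eq_iff)
qed

lemma eval_eig: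
  assumes V2: "is_voa V2" and f: "f \<in> eigsp Hm HL h" and c: "c \<in> eigsp W2 L2' k"
  shows "f c \<in> eigsp W LL (h + k)"
proof -
  have fH: "f \<in> Hm" and fL: "HL f = h *\<^sub>C f" using f unfolding eigsp_def by auto
  have c2: "c \<in> W2" and cL: "L2' c = k *\<^sub>C c" using c unfolding eigsp_def by auto
  note fD = homD[OF fH]
  have fc: "f c \<in> W" using fD(2)[OF c2] .
  have "L1 (f c) = h *\<^sub>C f c" using fun_cong[OF fL, of c] unfolding HL_apply by (simp add: scaleC_fun_apply)
  moreover have "L2 (f c) = k *\<^sub>C f c"
  proof -
    have "L2 (f c) = f (L2' c)" unfolding vir_def using fD(3)[OF is_voaD(3)[OF V2] c2] by simp
    also have "\<dots> = k *\<^sub>C f c" using cL clin_scale[OF fD(1) c2] by simp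
    finally show ?thesis .
  qed
  ultimately have "LL (f c) = (h + k) *\<^sub>C f c" by (simp add: scaleC_add_left)
  then show ?thesis unfolding eigsp_def using fc by simp
qed

lemma get_C:
  assumes G: "gens V2 W2 Y2' B" and ss2: "acts_semisimply W2 L2'"
  obtains C \<kappa> where "gens V2 W2 Y2' C" "\<And>c. c \<in> C \<Longrightarrow> c \<in> eigsp W2 L2' (\<kappa> c)"
proof -
  have Bfin: "finite B" "B \<subseteq> W2" using G unfolding gens_def by auto
  have W2eq: "W2 = cv.span (\<Union>k. eigsp W2 L2' k)" using ss2 unfolding acts_semisimply_def .
  have "\<forall>b\<in>B. \<exists>t. finite t \<and> t \<subseteq> (\<Union>k. eigsp W2 L2' k) \<and> b \<in> cv.span t"
  proof
    fix b assume "b \<in> B"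
    then have "b \<in> W2" using Bfin by auto
    then have "b \<in> cv.span (\<Union>k. eigsp W2 L2' k)" by (subst W2eq[symmetric])
    then show "\<exists>t. finite t \<and> t \<subseteq> (\<Union>k. eigsp W2 L2' k) \<and> b \<in> cv.span t"
      by (rule span_finite_subset)
  qed
  then obtain tb where tb: "\<And>b. b \<in> B \<Longrightarrow> finite (tb b) \<and> tb b \<subseteq> (\<Union>k. eigsp W2 L2' k) \<and> b \<in> cv.span (tb b)"
    by metis
  define C where "C = (\<Union>b\<in>B. tb b)"
  have Cfin: "finite C" unfolding C_def using Bfin(1) tb by blast
  have Csub: "C \<subseteq> (\<Union>k. eigsp W2 L2' k)" unfolding C_def using tb by blast
  then have CW2: "C \<subseteq> W2" unfolding eigsp_def by auto
  have "B \<subseteq> cv.span C"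
  proof
    fix b assume b: "b \<in> B"
    have "tb b \<subseteq> C" unfolding C_def using b by blast
    then show "b \<in> cv.span C" using tb[OF b] cv.span_mono by blast
  qed
  then have GC: "gens V2 W2 Y2' C" using gens_span[OF G Cfin CW2] by blast
  have "\<forall>c\<in>C. \<exists>k. c \<in> eigsp W2 L2' k" using Csub by blast
  then obtain \<kappa> where "\<And>c. c \<in> C \<Longrightarrow> c \<in> eigsp W2 L2' (\<kappa> c)" by metis
  then show ?thesis using that GC by blast
qed

lemma hom_fin_dim:
  assumes V2: "is_voa V2" and GC: "gens V2 W2 Y2' C" and \<kappa>: "\<And>c. c \<in> C \<Longrightarrow> c \<in> eigsp W2 L2' (\<kappa> c)"
    and fdW: "\<And>h. fin_dim (eigsp W LL h)"
  shows "fin_dim (eigsp Hm HL h)"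
proof -
  let ?E = "eigsp Hm HL h"
  have Es: "cv.subspace ?E" using eigsp_subspace[OF hom_subspace HL_lin] .
  have Cfin: "finite C" using GC unfolding gens_def by auto
  have main: "fin_dim {f \<in> ?E. \<forall>c\<in>C - D. f c = 0}" if "D \<subseteq> C" for D
    using Cfin[THEN finite_subset[OF that]] that
  proof (induction D rule: finite_subset_induct)
    case empty
    have "{f \<in> ?E. \<forall>c\<in>C - {}. f c = 0} \<subseteq> {0}"
    proof
      fix f assume "f \<in> {f \<in> ?E. \<forall>c\<in>C - {}. f c = 0}"
      then have "f \<in> Hm" "\<And>c. c \<in> C \<Longrightarrow> f c = 0" unfolding eigsp_def by auto
      then have "f = 0" using hom_vanish[OF GC] by blast
      then show "f \<in> {0}" by simp
    qed
    moreover have "{0} \<subseteq> cv.span {}" using cv.span_zero by simp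
    ultimately show ?case unfolding fin_dim_def by blast
  next
    case (insert a D)
    let ?U' = "{f \<in> ?E. \<forall>c\<in>C - insert a D. f c = 0}"
    let ?U = "{f \<in> ?E. \<forall>c\<in>C - D. f c = 0}"
    have eq: "{f \<in> ?U'. f a = 0} = ?U"
    proof -
      have "C - D = insert a (C - insert a D)" using insert(2,3) by blast
      then show ?thesis by auto
    qed
    show ?case
    proof (rule fin_dim_ext[where \<phi> = "\<lambda>f. f a"])
      show "cv.subspace ?U'" using subspace_vanish[OF Es] .
      show "(f + g) a = f a + g a" for f g :: "'m2 \<Rightarrow> 'm" by simp
      show "(c *\<^sub>C f) a = c *\<^sub>C f a" for c and f :: "'m2 \<Rightarrow> 'm" by (simp add: scaleC_fun_apply)
      show "(\<lambda>f. f a) ` ?U' \<subseteq> eigsp W LL (h + \<kappa> a)"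
        using eval_eig[OF V2 _ \<kappa>[OF insert(2)]] by auto
      show "fin_dim (eigsp W LL (h + \<kappa> a))" by (rule fdW)
      show "fin_dim {f \<in> ?U'. f a = 0}" unfolding eq using insert(4) by simp
    qed
  qed
  have "fin_dim {f \<in> ?E. \<forall>c\<in>C - C. f c = 0}" using main[of C] by simp
  then show ?thesis by simp
qed

lemma hom_trunc_below:
  assumes V2: "is_voa V2" and GC: "gens V2 W2 Y2' C" and \<kappa>: "\<And>c. c \<in> C \<Longrightarrow> c \<in> eigsp W2 L2' (\<kappa> c)"
    and trW: "\<And>h. \<exists>N::int. \<forall>n::int. n < N \<longrightarrow> eigsp W LL (h + of_int n) = {0}"
  shows "\<exists>N::int. \<forall>n::int. n < N \<longrightarrow> eigsp Hm HL (h + of_int n) = {0}"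
proof -
  have Cfin: "finite C" using GC unfolding gens_def by auto
  have "\<forall>c\<in>C. \<exists>N::int. \<forall>n::int. n < N \<longrightarrow> eigsp W LL (h + \<kappa> c + of_int n) = {0}"
    using trW by blast
  then obtain Nc where Nc: "\<And>c n. c \<in> C \<Longrightarrow> n < Nc c \<Longrightarrow> eigsp W LL (h + \<kappa> c + of_int n) = {0}"
    by metis
  define N where "N = Min (insert 0 (Nc ` C))"
  have NC: "c \<in> C \<Longrightarrow> N \<le> Nc c" for c unfolding N_def using Cfin by (intro Min_le) auto
  have "eigsp Hm HL (h + of_int n) = {0}" if n: "n < N" for n
  proof
    show "eigsp Hm HL (h + of_int n) \<subseteq> {0}"
    proof
      fix f assume f: "f \<in> eigsp Hm HL (h + of_int n)"
      have "f c = 0" if c: "c \<in> C" for c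
      proof -
        have "f c \<in> eigsp W LL (h + of_int n + \<kappa> c)" using eval_eig[OF V2 f \<kappa>[OF c]] .
        also have "h + of_int n + \<kappa> c = h + \<kappa> c + of_int n" by simp
        also have "eigsp W LL (h + \<kappa> c + of_int n) = {0}"
          using Nc[OF c] NC[OF c] n by simp
        finally show ?thesis by simp
      qed
      then have "f = 0" using hom_vanish[OF GC] f unfolding eigsp_def by blast
      then show "f \<in> {0}" by simp
    qed
  next
    have "HL 0 = (h + of_int n) *\<^sub>C 0"
      unfolding HL_apply using clin_zero[OF L1_lin W0] by (simp add: fun_eq_iff)
    moreover have "0 \<in> Hm" using cv.subspace_0[OF hom_subspace] .
    ultimately show "{0} \<subseteq> eigsp Hm HL (h + of_int n)" unfolding eigsp_def by simp
  qed
  then show ?thesis by blast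
qed

lemma L2_lin: "is_voa V2 \<Longrightarrow> clinear_on W L2" unfolding vir_def using W2D(3)[OF is_voaD(3)] by blast
lemma L2_W: "is_voa V2 \<Longrightarrow> y \<in> W \<Longrightarrow> L2 y \<in> W" unfolding vir_def using W2D(2)[OF is_voaD(3)] by blast

lemma hom_ordinary:
  assumes V2: "is_voa V2" and fg: "finitely_generated V2 W2 Y2'"
    and om2: "ordinary_module V2 W2 Y2'" and otm: "ordinary_tensor_module V1 V2 W Y1 Y2"
    and ss: "acts_semisimply W L1 \<or> acts_semisimply W L2"
  shows "ordinary_module V1 Hm (hom_vop Y1)"
proof -
  have og: "ordinary_grading W LL" using otm unfolding ordinary_tensor_module_def by auto
  have ssL: "acts_semisimply W LL" and fdW: "\<And>h. fin_dim (eigsp W LL h)"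
    and trW: "\<And>h. \<exists>N::int. \<forall>n::int. n < N \<longrightarrow> eigsp W LL (h + of_int n) = {0}"
    using og unfolding ordinary_grading_def by auto
  have ss2: "acts_semisimply W2 L2'" using om2 unfolding ordinary_module_def ordinary_grading_def by auto
  have ss1: "acts_semisimply W L1"
    using ss
  proof
    assume "acts_semisimply W L2"
    show "acts_semisimply W L1"
    proof (rule ss_sum[OF W1D(1) L1_lin _ L2_lin[OF V2] _ _ ssL \<open>acts_semisimply W L2\<close>])
      show "L1 y \<in> W" if "y \<in> W" for y using L1_W[OF that] .
      show "L2 y \<in> W" if "y \<in> W" for y using L2_W[OF V2 that] .
      show "L1 (L2 y) = L2 (L1 y)" if "y \<in> W" for y
        unfolding vir_def using comm[OF V1D(3) is_voaD(3)[OF V2] that] by simp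
    qed
  qed
  obtain B where G: "gens V2 W2 Y2' B" using fg_gens[OF fg] by blast
  obtain C \<kappa> where GC: "gens V2 W2 Y2' C" and \<kappa>: "\<And>c. c \<in> C \<Longrightarrow> c \<in> eigsp W2 L2' (\<kappa> c)"
    using get_C[OF G ss2] by blast
  have "ordinary_grading Hm HL"
    unfolding ordinary_grading_def
    using hom_ss[OF G ss1] hom_fin_dim[OF V2 GC \<kappa> fdW] hom_trunc_below[OF V2 GC \<kappa> trW] by blast
  then show ?thesis unfolding ordinary_module_def using hom_weak_module[OF fg] by blast
qed

end



theorem proposition4p8:
  fixes V1 :: "'v1::cvec voa_data" and V2 :: "'v2::cvec voa_data"
    and W :: "'m::cvec set" and Y1 :: "'v1 \<Rightarrow> int \<Rightarrow> 'm \<Rightarrow> 'm" and Y2 :: "'v2 \<Rightarrow> int \<Rightarrow> 'm \<Rightarrow> 'm"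
    and W2 :: "'m2::cvec set" and Y2' :: "'v2 \<Rightarrow> int \<Rightarrow> 'm2 \<Rightarrow> 'm2"
  assumes "is_voa V1" and "is_voa V2"
    and "weak_tensor_module V1 V2 W Y1 Y2"
    and "weak_module V2 W2 Y2'"
    and "finitely_generated V2 W2 Y2'"
  shows "weak_module V1 (hom_space V2 W2 Y2' W Y2) (hom_vop Y1)
    \<and> ((ordinary_module V2 W2 Y2' \<and> ordinary_tensor_module V1 V2 W Y1 Y2 \<and>
         (acts_semisimply W (vir V1 Y1 0) \<or> acts_semisimply W (vir V2 Y2 0)))
        \<longrightarrow> ordinary_module V1 (hom_space V2 W2 Y2' W Y2) (hom_vop Y1))"
proof -
  interpret homctx V1 V2 W Y1 Y2 W2 Y2'
    by unfold_locales (rule assms)+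
  show ?thesis
    using hom_weak_module[OF assms(5)] hom_ordinary[OF assms(2) assms(5)] by blast
qed

end
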